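(* Let $E$, $D$, $S$ be binary random variables taking values in $\{0,1\}$ such that every joint cell probability $P(E=e,D=d,S=s)$ is positive, and write $p(d,e)=P(S=1\mid D=d,E=e)$. Suppose there is no interaction of $E$ and $D$ on $S$ on the odds ratio scale, i.e. $\mathrm{OR}_{ES\mid D=1}=\mathrm{OR}_{ES\mid D=0}$. (a) If $p(d,e)$ is non-decreasing in both $d$ and $e$, or non-increasing in both $d$ and $e$, then $\mathrm{OR}_{ED\mid S=1}\le \mathrm{OR}_{ED}$. (b) If $p(d,e)$ is non-decreasing in one of $d,e$ and non-increasing in the other, then $\mathrm{OR}_{ED\mid S=1}\ge \mathrm{OR}_{ED}$.
   Context: For binary random variables $A,B$ and a random variable $C$, $\mathrm{OR}_{AB\mid C=c}=\frac{P(A=1,B=1\mid C=c)P(A=0,B=0\mid C=c)}{P(A=1,B=0\mid C=c)P(A=0,B=1\mid C=c)}$, and $\mathrm{OR}_{AB}$ is the unconditional version. "Non-decreasing in $d$" means $p(1,e)\ge p(0,e)$ for each $e\in\{0,1\}$; "non-decreasing in $e$" means $p(d,1)\ge p(d,0)$ for each $d\in\{0,1\}$; non-increasing analogously. *)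

theory Defs
  imports Complex_Main
begin

text \<open>A joint distribution of three binary random variables E, D, S with values in {0,1}
  is given by its cell probabilities  q e d s = P(E=e, D=d, S=s).\<close>

definition joint_dist3 :: "(nat \<Rightarrow> nat \<Rightarrow> nat \<Rightarrow> real) \<Rightarrow> bool" where
  "joint_dist3 q \<longleftrightarrow>
     (\<forall>e\<in>{0,1}. \<forall>d\<in>{0,1}. \<forall>s\<in>{0,1}. q e d s \<ge> 0) \<and>
     (\<Sum>e\<in>{0::nat,1}. \<Sum>d\<in>{0::nat,1}. \<Sum>s\<in>{0::nat,1}. q e d s) = 1"

definition odds_ratio :: "(nat \<Rightarrow> nat \<Rightarrow> real) \<Rightarrow> real" where
  "odds_ratio f = (f 1 1 * f 0 0) / (f 1 0 * f 0 1)"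

definition PD :: "(nat \<Rightarrow> nat \<Rightarrow> nat \<Rightarrow> real) \<Rightarrow> nat \<Rightarrow> real" where
  "PD q d = (\<Sum>e\<in>{0::nat,1}. \<Sum>s\<in>{0::nat,1}. q e d s)"

definition PS :: "(nat \<Rightarrow> nat \<Rightarrow> nat \<Rightarrow> real) \<Rightarrow> nat \<Rightarrow> real" where
  "PS q s = (\<Sum>e\<in>{0::nat,1}. \<Sum>d\<in>{0::nat,1}. q e d s)"

definition OR_ES_given_D :: "(nat \<Rightarrow> nat \<Rightarrow> nat \<Rightarrow> real) \<Rightarrow> nat \<Rightarrow> real" where
  "OR_ES_given_D q d = odds_ratio (\<lambda>e s. q e d s / PD q d)"

definition OR_ED_given_S :: "(nat \<Rightarrow> nat \<Rightarrow> nat \<Rightarrow> real) \<Rightarrow> nat \<Rightarrow> real" where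
  "OR_ED_given_S q s = odds_ratio (\<lambda>e d. q e d s / PS q s)"

definition OR_ED :: "(nat \<Rightarrow> nat \<Rightarrow> nat \<Rightarrow> real) \<Rightarrow> real" where
  "OR_ED q = odds_ratio (\<lambda>e d. q e d 0 + q e d 1)"

definition pS :: "(nat \<Rightarrow> nat \<Rightarrow> nat \<Rightarrow> real) \<Rightarrow> nat \<Rightarrow> nat \<Rightarrow> real" where
  "pS q d e = q e d 1 / (q e d 0 + q e d 1)"

definition nondec_d :: "(nat \<Rightarrow> nat \<Rightarrow> real) \<Rightarrow> bool" where
  "nondec_d p \<longleftrightarrow> (\<forall>e\<in>{0,1}. p 1 e \<ge> p 0 e)"
definition nondec_e :: "(nat \<Rightarrow> nat \<Rightarrow> real) \<Rightarrow> bool" where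
  "nondec_e p \<longleftrightarrow> (\<forall>d\<in>{0,1}. p d 1 \<ge> p d 0)"
definition noninc_d :: "(nat \<Rightarrow> nat \<Rightarrow> real) \<Rightarrow> bool" where
  "noninc_d p \<longleftrightarrow> (\<forall>e\<in>{0,1}. p 1 e \<le> p 0 e)"
definition noninc_e :: "(nat \<Rightarrow> nat \<Rightarrow> real) \<Rightarrow> bool" where
  "noninc_e p \<longleftrightarrow> (\<forall>d\<in>{0,1}. p d 1 \<le> p d 0)"

end

theory Submission
  imports Defs
begin

lemma sum_ineq_same:
  fixes o00 o01 o10 o11 :: real
  assumes "o00 > 0" "o01 > 0" "o10 > 0" "o11 > 0" "o11*o00 = o10*o01"
    and "o10 \<le> o11" "o01 \<le> o11"
  shows "o10 + o01 \<le> o11 + o00"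
proof -
  have "0 \<le> (o11-o10)*(o11-o01)" using assms by (simp add: mult_nonneg_nonneg)
  hence "0 \<le> o11*(o11 + o00 - o10 - o01)" using assms(5) by (simp add: algebra_simps)
  thus ?thesis using assms(4) by (simp add: zero_le_mult_iff)
qed

lemma key:
  fixes a00 a01 a10 a11 o00 o01 o10 o11 :: real
  assumes "a00 > 0" "a01 > 0" "a10 > 0" "a11 > 0"
    "o00 > 0" "o01 > 0" "o10 > 0" "o11 > 0" "o11*o00 = o10*o01"
  shows "(o10 + o01 \<le> o11 + o00 \<longrightarrow>
          (o11*a11*(o00*a00))/(o10*a10*(o01*a01)) \<le> ((a11+o11*a11)*(a00+o00*a00))/((a10+o10*a10)*(a01+o01*a01)))
       \<and> (o10 + o01 \<ge> o11 + o00 \<longrightarrow>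
          (o11*a11*(o00*a00))/(o10*a10*(o01*a01)) \<ge> ((a11+o11*a11)*(a00+o00*a00))/((a10+o10*a10)*(a01+o01*a01)))"
proof -
  define K where "K = (a11*a00)/(a10*a01)"
  have K: "K > 0" using assms unfolding K_def by simp
  have L: "(o11*a11*(o00*a00))/(o10*a10*(o01*a01)) = K"
    using assms unfolding K_def by (simp add: field_simps)
  have R: "((a11+o11*a11)*(a00+o00*a00))/((a10+o10*a10)*(a01+o01*a01))
       = K * ((1+o11)*(1+o00)) / ((1+o10)*(1+o01))"
    using assms unfolding K_def by (simp add: field_simps)
  have e1: "(1+o11)*(1+o00) = 1 + (o11+o00) + o10*o01" using assms(9) by (simp add: algebra_simps)
  have e2: "(1+o10)*(1+o01) = 1 + (o10+o01) + o10*o01" by (simp add: algebra_simps)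
  have d: "(1+o10)*(1+o01) > 0" using assms by simp
  show ?thesis
  proof (intro conjI impI)
    assume h: "o10 + o01 \<le> o11 + o00"
    have "(1+o10)*(1+o01) \<le> (1+o11)*(1+o00)" using e1 e2 h by simp
    hence "1 \<le> ((1+o11)*(1+o00)) / ((1+o10)*(1+o01))" using d by simp
    hence "K*1 \<le> K * (((1+o11)*(1+o00)) / ((1+o10)*(1+o01)))" using K by (intro mult_left_mono) auto
    thus "(o11*a11*(o00*a00))/(o10*a10*(o01*a01)) \<le> ((a11+o11*a11)*(a00+o00*a00))/((a10+o10*a10)*(a01+o01*a01))"
      using L R by simp
  next
    assume h: "o10 + o01 \<ge> o11 + o00"
    have "(1+o10)*(1+o01) \<ge> (1+o11)*(1+o00)" using e1 e2 h by simp
    hence "1 \<ge> ((1+o11)*(1+o00)) / ((1+o10)*(1+o01))" using d by simp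
    hence "K*1 \<ge> K * (((1+o11)*(1+o00)) / ((1+o10)*(1+o01)))" using K by (intro mult_left_mono) auto
    thus "(o11*a11*(o00*a00))/(o10*a10*(o01*a01)) \<ge> ((a11+o11*a11)*(a00+o00*a00))/((a10+o10*a10)*(a01+o01*a01))"
      using L R by simp
  qed
qed

theorem mainTheorem2:
  fixes q :: "nat \<Rightarrow> nat \<Rightarrow> nat \<Rightarrow> real"
  assumes dist: "joint_dist3 q"
    and pos: "\<forall>e\<in>{0,1}. \<forall>d\<in>{0,1}. \<forall>s\<in>{0,1}. q e d s > 0"
    and noint: "OR_ES_given_D q 1 = OR_ES_given_D q 0"
  shows "((nondec_d (pS q) \<and> nondec_e (pS q)) \<or> (noninc_d (pS q) \<and> noninc_e (pS q))
            \<longrightarrow> OR_ED_given_S q 1 \<le> OR_ED q)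
       \<and> ((nondec_d (pS q) \<and> noninc_e (pS q)) \<or> (noninc_d (pS q) \<and> nondec_e (pS q))
            \<longrightarrow> OR_ED_given_S q 1 \<ge> OR_ED q)"
proof -
  define o' where "o' e d = q e d 1 / q e d 0" for e d
  have a: "q e d 0 > 0" if "e \<in> {0,1}" "d \<in> {0,1}" for e d using pos that by auto
  have b: "q e d 1 > 0" if "e \<in> {0,1}" "d \<in> {0,1}" for e d using pos that by auto
  have qo: "q e d 1 = o' e d * q e d 0" if "e \<in> {0,1}" "d \<in> {0,1}" for e d
    using a[OF that] unfolding o'_def by simp
  have op: "o' e d > 0" if "e \<in> {0,1}" "d \<in> {0,1}" for e d
    using a[OF that] b[OF that] unfolding o'_def by simp
  have pSo: "pS q d e = o' e d / (1 + o' e d)" if "e \<in> {0,1}" "d \<in> {0,1}" for e d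
    using a[OF that] b[OF that] unfolding o'_def pS_def by (simp add: field_simps)
  have mono: "(pS q d' e' \<le> pS q d e) \<longleftrightarrow> (o' e' d' \<le> o' e d)"
    if "e \<in> {0,1}" "d \<in> {0,1}" "e' \<in> {0,1}" "d' \<in> {0,1}" for e d e' d'
  proof -
    have x: "o' e d > 0" "o' e' d' > 0" using op that by auto
    have "(o' e' d' / (1 + o' e' d') \<le> o' e d / (1 + o' e d)) \<longleftrightarrow>
          o' e' d' * (1 + o' e d) \<le> o' e d * (1 + o' e' d')"
      using x by (simp add: divide_simps)
    also have "\<dots> \<longleftrightarrow> o' e' d' \<le> o' e d" by (simp add: algebra_simps)
    finally show ?thesis using pSo that by simp
  qed
  have PDp: "PD q d > 0" if "d \<in> {0,1}" for d
    using a b that unfolding PD_def by (simp add: add_pos_pos)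
  have PSp: "PS q 1 > 0" using a b unfolding PS_def by (simp add: add_pos_pos)
  have ORES: "OR_ES_given_D q d = o' 1 d / o' 0 d" if "d \<in> {0,1}" for d
    using a[of 0 d] a[of 1 d] b[of 0 d] b[of 1 d] PDp[OF that] that
    unfolding OR_ES_given_D_def odds_ratio_def o'_def by (simp add: field_simps)
  have prod: "o' 1 1 * o' 0 0 = o' 1 0 * o' 0 1"
    using noint ORES[of 0] ORES[of 1] op[of 0 0] op[of 0 1] op[of 1 0] op[of 1 1]
    by (simp add: field_simps)
  have S1: "OR_ED_given_S q 1 = (o' 1 1*q 1 1 0*(o' 0 0*q 0 0 0))/(o' 1 0*q 1 0 0*(o' 0 1*q 0 1 0))"
    using PSp a b qo unfolding OR_ED_given_S_def odds_ratio_def by (simp add: field_simps)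
  have S2: "OR_ED q = ((q 1 1 0+o' 1 1*q 1 1 0)*(q 0 0 0+o' 0 0*q 0 0 0))/((q 1 0 0+o' 1 0*q 1 0 0)*(q 0 1 0+o' 0 1*q 0 1 0))"
    using qo unfolding OR_ED_def odds_ratio_def by simp
  note K = key[of "q 0 0 0" "q 0 1 0" "q 1 0 0" "q 1 1 0" "o' 0 0" "o' 0 1" "o' 1 0" "o' 1 1"]
  have K': "(o' 1 0 + o' 0 1 \<le> o' 1 1 + o' 0 0 \<longrightarrow> OR_ED_given_S q 1 \<le> OR_ED q) \<and>
            (o' 1 0 + o' 0 1 \<ge> o' 1 1 + o' 0 0 \<longrightarrow> OR_ED_given_S q 1 \<ge> OR_ED q)"
    unfolding S1 S2 using K a op prod by simp
  show ?thesis
  proof (intro conjI impI)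
    assume h: "(nondec_d (pS q) \<and> nondec_e (pS q)) \<or> (noninc_d (pS q) \<and> noninc_e (pS q))"
    have "o' 1 0 + o' 0 1 \<le> o' 1 1 + o' 0 0"
      using h
    proof
      assume "nondec_d (pS q) \<and> nondec_e (pS q)"
      hence "o' 1 0 \<le> o' 1 1" "o' 0 1 \<le> o' 1 1"
        unfolding nondec_d_def nondec_e_def using mono by auto
      thus ?thesis using sum_ineq_same[of "o' 0 0" "o' 0 1" "o' 1 0" "o' 1 1"] op prod by auto
    next
      assume "noninc_d (pS q) \<and> noninc_e (pS q)"
      hence "o' 1 0 \<le> o' 0 0" "o' 0 1 \<le> o' 0 0"
        unfolding noninc_d_def noninc_e_def using mono by auto
      thus ?thesis using sum_ineq_same[of "o' 1 1" "o' 0 1" "o' 1 0" "o' 0 0"] op prod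
        by (auto simp: mult.commute)
    qed
    thus "OR_ED_given_S q 1 \<le> OR_ED q" using K' by simp
  next
    assume h: "(nondec_d (pS q) \<and> noninc_e (pS q)) \<or> (noninc_d (pS q) \<and> nondec_e (pS q))"
    have "o' 1 0 + o' 0 1 \<ge> o' 1 1 + o' 0 0"
      using h
    proof
      assume "nondec_d (pS q) \<and> noninc_e (pS q)"
      hence "o' 0 0 \<le> o' 0 1" "o' 1 1 \<le> o' 0 1"
        unfolding nondec_d_def noninc_e_def using mono by auto
      thus ?thesis using sum_ineq_same[of "o' 1 0" "o' 1 1" "o' 0 0" "o' 0 1"] op prod
        by (auto simp: mult.commute)
    next
      assume "noninc_d (pS q) \<and> nondec_e (pS q)"
      hence "o' 0 0 \<le> o' 1 0" "o' 1 1 \<le> o' 1 0"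
        unfolding noninc_d_def nondec_e_def using mono by auto
      thus ?thesis using sum_ineq_same[of "o' 0 1" "o' 0 0" "o' 1 1" "o' 1 0"] op prod
        by (auto simp: mult.commute)
    qed
    thus "OR_ED_given_S q 1 \<ge> OR_ED q" using K' by simp
  qed
qed

end
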